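(* For any generalized causal teams $S$ and $T$ over a signature $\sigma$: $S\models^g\bigvee_{\mathcal F\in\mathbb F_\sigma}\big(\Theta^{(T^{\mathcal F})^-}\wedge\Phi^{\mathcal F}\big)$ if and only if $S\preccurlyeq T$.
   Context: A signature $\sigma=(\mathrm{Dom},\mathrm{Ran})$: $\mathrm{Dom}$ nonempty finite set of variables, each with nonempty finite range $\mathrm{Ran}(X)$; $\mathbf X=\mathbf x$ abbreviates $X_1=x_1\wedge\dots\wedge X_n=x_n$ ($\mathbf x\in\prod\mathrm{Ran}(X_i)$), inconsistent if it contains $X=x,X=x'$ with $x\ne x'$. $\mathcal{CO}[\sigma]$: $\alpha::=X=x\mid\neg\alpha\mid\alpha\wedge\alpha\mid\alpha\vee\alpha\mid\mathbf X=\mathbf x\;\Box\!\!\rightarrow\alpha$; $\alpha\supset\beta$ abbreviates $\neg\alpha\vee\beta$; $\bot$ abbreviates $X=x\wedge\neg(X=x)$. Systems of functions $\mathcal F$: for each $V\in\mathrm{En}(\mathcal F)\subseteq\mathrm{Dom}$ parents $PA^{\mathcal F}_V\subseteq\mathrm{Dom}\setminus\{V\}$ and $\mathcal F_V:\mathrm{Ran}(PA^{\mathcal F}_V)\to\mathrm{Ran}(V)$; $\mathrm{Ex}(\mathcal F)=\mathrm{Dom}\setminus\mathrm{En}(\mathcal F)$; only recursive (acyclic parent graph), forming the finite set $\mathbb F_\sigma$. An assignment $s$ is compatible with $\mathcal F$ if $s(V)=\mathcal F_V(s(PA^{\mathcal F}_V))$ for $V\in\mathrm{En}(\mathcal F)$.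 A generalized causal team is a set $T$ of compatible pairs $(s,\mathcal F)$ with $\mathcal F\in\mathbb F_\sigma$; causal subteams are subsets; $T^-=\{s:(s,\mathcal F)\in T\}$. For consistent $\mathbf X=\mathbf x$: $\mathcal F_{\mathbf X=\mathbf x}$ restricts $\mathcal F$ to $\mathrm{En}(\mathcal F)\setminus\mathbf X$; $s^{\mathcal F}_{\mathbf X=\mathbf x}$: $X_i\mapsto x_i$, $V\mapsto s(V)$ on $\mathrm{Ex}(\mathcal F)\setminus\mathbf X$, $V\mapsto\mathcal F_V(s^{\mathcal F}_{\mathbf X=\mathbf x}(PA^{\mathcal F}_V))$ on $\mathrm{En}(\mathcal F)\setminus\mathbf X$; $T_{\mathbf X=\mathbf x}=\{(s^{\mathcal F}_{\mathbf X=\mathbf x},\mathcal F_{\mathbf X=\mathbf x}):(s,\mathcal F)\in T\}$. $\models^g$: $T\models X=x$ iff $s(X)=x$ for all $s\in T^-$; $T\models\neg\alpha$ iff $\{(s,\mathcal F)\}\not\models\alpha$ for all $(s,\mathcal F)\in T$; $\wedge$ classical; $T\models\alpha\vee\beta$ iff $T=T_1\cup T_2$ with $T_1\models\alpha$, $T_2\models\beta$ (an empty $\vee$-disjunction is $\bot$); $T\models\mathbf X=\mathbf x\;\Box\!\!\rightarrow\alpha$ iff $\mathbf X=\mathbf x$ inconsistent or $T_{\mathbf X=\mathbf x}\models\alpha$. $\mathrm{Cn}(\mathcal F)=\{V\in\mathrm{En}(\mathcal F):\mathcal F_V\text{ constant}\}$; $\mathcal F_V\sim\mathcal G_V$ iff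 $\mathcal F_V(\mathbf x\mathbf y)=\mathcal G_V(\mathbf x\mathbf z)$ for all $\mathbf x\in\mathrm{Ran}(PA^{\mathcal F}_V\cap PA^{\mathcal G}_V)$, $\mathbf y\in\mathrm{Ran}(PA^{\mathcal F}_V\setminus PA^{\mathcal G}_V)$, $\mathbf z\in\mathrm{Ran}(PA^{\mathcal G}_V\setminus PA^{\mathcal F}_V)$; $\mathcal F\sim\mathcal G$ iff $\mathrm{En}(\mathcal F)\setminus\mathrm{Cn}(\mathcal F)=\mathrm{En}(\mathcal G)\setminus\mathrm{Cn}(\mathcal G)$ and $\mathcal F_V\sim\mathcal G_V$ for each such $V$. $T^{\mathcal F}=\{(s,\mathcal G)\in T:\mathcal G\sim\mathcal F\}$; $S\approx T$ iff $(S^{\mathcal F})^-=(T^{\mathcal F})^-$ for all $\mathcal F\in\mathbb F_\sigma$; $S\preccurlyeq T$ iff $S\approx R$ for some $R\subseteq T$ (and $\emptyset\preccurlyeq T$ always). $\Theta^{A}:=\bigvee_{s\in A}\bigwedge_{V\in\mathrm{Dom}}V=s(V)$ for a set $A$ of assignments ($\bot$ if $A=\emptyset$). With $\mathbf W_V$ listing $\mathrm{Dom}\setminus\{V\}$: $\Phi^{\mathcal F}:=\bigwedge_{V\in\mathrm{En}(\mathcal F)\setminus\mathrm{Cn}(\mathcal F)}\eta(V)\wedge\bigwedge_{V\notin\mathrm{En}(\mathcal F)\setminus\mathrm{Cn}(\mathcal F)}\xi(V)$, where $\eta(V)$ is the conjunction of all $(\mathbf W=\mathbf w\wedge PA^{\mathcal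 F}_V=\mathbf p)\;\Box\!\!\rightarrow V=\mathcal F_V(\mathbf p)$ ($\mathbf W$ listing $\mathrm{Dom}\setminus(PA^{\mathcal F}_V\cup\{V\})$, $\mathbf w\in\mathrm{Ran}(\mathbf W)$, $\mathbf p\in\mathrm{Ran}(PA^{\mathcal F}_V)$) and $\xi(V)$ is the conjunction of all $V=v\supset(\mathbf W_V=\mathbf w\;\Box\!\!\rightarrow V=v)$ ($v\in\mathrm{Ran}(V)$, $\mathbf w\in\mathrm{Ran}(\mathbf W_V)$). *)

theory Defs
  imports Main "HOL-Library.FuncSet"
begin

definition signature :: "'v set \<Rightarrow> ('v \<Rightarrow> 'a set) \<Rightarrow> bool" where
  "signature Dom Ran \<longleftrightarrow> finite Dom \<and> Dom \<noteq> {} \<and>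
     (\<forall>X\<in>Dom. finite (Ran X) \<and> Ran X \<noteq> {})"

text \<open>Assignments to a set A of variables (Ran(A)) are the extensional functions
  in PiE A Ran.  An assignment of the signature is an element of PiE Dom Ran.\<close>

text \<open>An antecedent X1=x1 and ... and Xn=xn is a list of variable/value pairs.\<close>

datatype ('v, 'a) form =
    Eq 'v 'a
  | Neg "('v, 'a) form"
  | And "('v, 'a) form" "('v, 'a) form"
  | Or "('v, 'a) form" "('v, 'a) form"
  | Cf "('v \<times> 'a) list" "('v, 'a) form"

definition consistent :: "('v \<times> 'a) list \<Rightarrow> bool" where
  "consistent Xs \<longleftrightarrow> (\<forall>X x x'. (X, x) \<in> set Xs \<and> (X, x') \<in> set Xs \<longrightarrow> x = x')"

definition Bot :: "'v set \<Rightarrow> ('v \<Rightarrow> 'a set) \<Rightarrow> ('v, 'a) form" where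
  "Bot Dom Ran = (let X = (SOME X. X \<in> Dom); x = (SOME x. x \<in> Ran X)
                  in And (Eq X x) (Neg (Eq X x)))"

definition Top :: "'v set \<Rightarrow> ('v \<Rightarrow> 'a set) \<Rightarrow> ('v, 'a) form" where
  "Top Dom Ran = Neg (Bot Dom Ran)"

fun BigOr :: "'v set \<Rightarrow> ('v \<Rightarrow> 'a set) \<Rightarrow> ('v, 'a) form list \<Rightarrow> ('v, 'a) form" where
  "BigOr Dom Ran [] = Bot Dom Ran"
| "BigOr Dom Ran [a] = a"
| "BigOr Dom Ran (a # as) = Or a (BigOr Dom Ran as)"

fun BigAnd :: "'v set \<Rightarrow> ('v \<Rightarrow> 'a set) \<Rightarrow> ('v, 'a) form list \<Rightarrow> ('v, 'a) form" where
  "BigAnd Dom Ran [] = Top Dom Ran"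
| "BigAnd Dom Ran [a] = a"
| "BigAnd Dom Ran (a # as) = And a (BigAnd Dom Ran as)"

definition list_of :: "'b set \<Rightarrow> 'b list" where
  "list_of A = (SOME xs. set xs = A \<and> distinct xs)"

definition ant :: "'v set \<Rightarrow> ('v \<Rightarrow> 'a) \<Rightarrow> ('v \<times> 'a) list" where
  "ant W w = map (\<lambda>X. (X, w X)) (list_of W)"

text \<open>A system of functions is a triple (En, PA, Fn): endogenous variables, parent
  sets, and for each endogenous V the function F_V, represented canonically as a map
  on full assignments that depends only on the values of the parents, and is
  'undefined' on arguments outside Ran(PA_V).  For non-endogenous V, PA V = {} and
  Fn V is constantly undefined (canonical representation).\<close>

type_synonym ('v, 'a) sys = "'v set \<times> ('v \<Rightarrow> 'v set) \<times> ('v \<Rightarrow> ('v \<Rightarrow> 'a) \<Rightarrow> 'a)"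

definition En :: "('v, 'a) sys \<Rightarrow> 'v set" where "En F = fst F"
definition PA :: "('v, 'a) sys \<Rightarrow> 'v \<Rightarrow> 'v set" where "PA F = fst (snd F)"
definition Fn :: "('v, 'a) sys \<Rightarrow> 'v \<Rightarrow> ('v \<Rightarrow> 'a) \<Rightarrow> 'a" where "Fn F = snd (snd F)"

definition parent_rel :: "('v, 'a) sys \<Rightarrow> ('v \<times> 'v) set" where
  "parent_rel F = {(W, V). V \<in> En F \<and> W \<in> PA F V}"

definition is_sys :: "'v set \<Rightarrow> ('v \<Rightarrow> 'a set) \<Rightarrow> ('v, 'a) sys \<Rightarrow> bool" where
  "is_sys Dom Ran F \<longleftrightarrow>
     En F \<subseteq> Dom \<and>
     (\<forall>V. V \<notin> En F \<longrightarrow> PA F V = {} \<and> Fn F V = (\<lambda>_. undefined)) \<and>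
     (\<forall>V\<in>En F. PA F V \<subseteq> Dom - {V} \<and>
        (\<forall>p. Fn F V p = (if (\<forall>W\<in>PA F V. p W \<in> Ran W)
                          then Fn F V (restrict p (PA F V)) else undefined)) \<and>
        (\<forall>p\<in>PiE (PA F V) Ran. Fn F V p \<in> Ran V)) \<and>
     acyclic (parent_rel F)"

definition Fsig :: "'v set \<Rightarrow> ('v \<Rightarrow> 'a set) \<Rightarrow> ('v, 'a) sys set" where
  "Fsig Dom Ran = {F. is_sys Dom Ran F}"

definition compatible :: "('v \<Rightarrow> 'a) \<Rightarrow> ('v, 'a) sys \<Rightarrow> bool" where
  "compatible s F \<longleftrightarrow> (\<forall>V\<in>En F. s V = Fn F V s)"

type_synonym ('v, 'a) team = "(('v \<Rightarrow> 'a) \<times> ('v, 'a) sys) set"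

definition gcteam :: "'v set \<Rightarrow> ('v \<Rightarrow> 'a set) \<Rightarrow> ('v, 'a) team \<Rightarrow> bool" where
  "gcteam Dom Ran T \<longleftrightarrow>
     (\<forall>(s, F)\<in>T. s \<in> PiE Dom Ran \<and> F \<in> Fsig Dom Ran \<and> compatible s F)"

definition team_minus :: "('v, 'a) team \<Rightarrow> ('v \<Rightarrow> 'a) set" where
  "team_minus T = fst ` T"

definition ivars :: "('v \<times> 'a) list \<Rightarrow> 'v set" where
  "ivars Xs = fst ` set Xs"

definition sys_do :: "('v, 'a) sys \<Rightarrow> ('v \<times> 'a) list \<Rightarrow> ('v, 'a) sys" where
  "sys_do F Xs =
     (En F - ivars Xs,
      \<lambda>V. if V \<in> En F - ivars Xs then PA F V else {},
      \<lambda>V. if V \<in> En F - ivars Xs then Fn F V else (\<lambda>_. undefined))"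

text \<open>s^F_{X=x}: the unique assignment satisfying the recursive clauses of the
  definition (unique since F is recursive).\<close>

definition asg_do :: "('v, 'a) sys \<Rightarrow> ('v \<times> 'a) list \<Rightarrow> ('v \<Rightarrow> 'a) \<Rightarrow> ('v \<Rightarrow> 'a)" where
  "asg_do F Xs s = (THE s'.
     (\<forall>V. (V \<in> ivars Xs \<longrightarrow> s' V = the (map_of Xs V)) \<and>
          (V \<notin> ivars Xs \<and> V \<notin> En F \<longrightarrow> s' V = s V) \<and>
          (V \<notin> ivars Xs \<and> V \<in> En F \<longrightarrow> s' V = Fn F V s')))"

definition team_do :: "('v, 'a) team \<Rightarrow> ('v \<times> 'a) list \<Rightarrow> ('v, 'a) team" where
  "team_do T Xs = (\<lambda>(s, F). (asg_do F Xs s, sys_do F Xs)) ` T"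

fun sat :: "('v, 'a) team \<Rightarrow> ('v, 'a) form \<Rightarrow> bool" where
  "sat T (Eq X x) = (\<forall>s\<in>team_minus T. s X = x)"
| "sat T (Neg \<alpha>) = (\<forall>p\<in>T. \<not> sat {p} \<alpha>)"
| "sat T (And \<alpha> \<beta>) = (sat T \<alpha> \<and> sat T \<beta>)"
| "sat T (Or \<alpha> \<beta>) = (\<exists>T1 T2. T = T1 \<union> T2 \<and> sat T1 \<alpha> \<and> sat T2 \<beta>)"
| "sat T (Cf Xs \<alpha>) = (\<not> consistent Xs \<or> sat (team_do T Xs) \<alpha>)"

definition Cn :: "('v \<Rightarrow> 'a set) \<Rightarrow> ('v, 'a) sys \<Rightarrow> 'v set" where
  "Cn Ran F = {V \<in> En F. \<exists>c. \<forall>p\<in>PiE (PA F V) Ran. Fn F V p = c}"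

definition fn_sim :: "('v \<Rightarrow> 'a set) \<Rightarrow> ('v, 'a) sys \<Rightarrow> ('v, 'a) sys \<Rightarrow> 'v \<Rightarrow> bool" where
  "fn_sim Ran F G V \<longleftrightarrow>
     (\<forall>p\<in>PiE (PA F V) Ran. \<forall>q\<in>PiE (PA G V) Ran.
        (\<forall>W\<in>PA F V \<inter> PA G V. p W = q W) \<longrightarrow> Fn F V p = Fn G V q)"

definition sys_sim :: "('v \<Rightarrow> 'a set) \<Rightarrow> ('v, 'a) sys \<Rightarrow> ('v, 'a) sys \<Rightarrow> bool" where
  "sys_sim Ran F G \<longleftrightarrow> En F - Cn Ran F = En G - Cn Ran G \<and>
     (\<forall>V\<in>En F - Cn Ran F. fn_sim Ran F G V)"

definition team_F :: "('v \<Rightarrow> 'a set) \<Rightarrow> ('v, 'a) team \<Rightarrow> ('v, 'a) sys \<Rightarrow> ('v, 'a) team" where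
  "team_F Ran T F = {(s, G) \<in> T. sys_sim Ran G F}"

definition team_approx :: "'v set \<Rightarrow> ('v \<Rightarrow> 'a set) \<Rightarrow> ('v, 'a) team \<Rightarrow> ('v, 'a) team \<Rightarrow> bool" where
  "team_approx Dom Ran S T \<longleftrightarrow>
     (\<forall>F\<in>Fsig Dom Ran. team_minus (team_F Ran S F) = team_minus (team_F Ran T F))"

definition team_preceq :: "'v set \<Rightarrow> ('v \<Rightarrow> 'a set) \<Rightarrow> ('v, 'a) team \<Rightarrow> ('v, 'a) team \<Rightarrow> bool" where
  "team_preceq Dom Ran S T \<longleftrightarrow> S = {} \<or> (\<exists>R\<subseteq>T. team_approx Dom Ran S R)"

definition Theta :: "'v set \<Rightarrow> ('v \<Rightarrow> 'a set) \<Rightarrow> ('v \<Rightarrow> 'a) set \<Rightarrow> ('v, 'a) form" where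
  "Theta Dom Ran A =
     BigOr Dom Ran (map (\<lambda>s. BigAnd Dom Ran (map (\<lambda>V. Eq V (s V)) (list_of Dom))) (list_of A))"

definition eta :: "'v set \<Rightarrow> ('v \<Rightarrow> 'a set) \<Rightarrow> ('v, 'a) sys \<Rightarrow> 'v \<Rightarrow> ('v, 'a) form" where
  "eta Dom Ran F V =
     (let W = Dom - (PA F V \<union> {V}) in
      BigAnd Dom Ran (map (\<lambda>(w, p). Cf (ant W w @ ant (PA F V) p) (Eq V (Fn F V p)))
                       (list_of (PiE W Ran \<times> PiE (PA F V) Ran))))"

definition xi :: "'v set \<Rightarrow> ('v \<Rightarrow> 'a set) \<Rightarrow> 'v \<Rightarrow> ('v, 'a) form" where
  "xi Dom Ran V =
     (let W = Dom - {V} in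
      BigAnd Dom Ran (map (\<lambda>(v, w). Or (Neg (Eq V v)) (Cf (ant W w) (Eq V v)))
                       (list_of (Ran V \<times> PiE W Ran))))"

definition Phi :: "'v set \<Rightarrow> ('v \<Rightarrow> 'a set) \<Rightarrow> ('v, 'a) sys \<Rightarrow> ('v, 'a) form" where
  "Phi Dom Ran F =
     And (BigAnd Dom Ran (map (eta Dom Ran F) (list_of (En F - Cn Ran F))))
         (BigAnd Dom Ran (map (xi Dom Ran) (list_of (Dom - (En F - Cn Ran F)))))"

end

theory Submission
  imports Defs
begin

lemma list_of_set: "finite A \<Longrightarrow> set (list_of A) = A"
  unfolding list_of_def
  by (metis (mono_tags, lifting) finite_distinct_list someI_ex)

lemma sat_flat: "sat T \<phi> \<longleftrightarrow> (\<forall>p\<in>T. sat {p} \<phi>)"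
proof (induction \<phi> arbitrary: T)
  case (Eq X x) show ?case by (simp add: team_minus_def)
next
  case (Neg \<phi>) show ?case by simp
next
  case (And a b) show ?case using And.IH(1)[of T] And.IH(2)[of T] by auto
next
  case (Or a b)
  have ea: "sat {} a" and eb: "sat {} b" using Or.IH[of "{}"] by auto
  have single: "sat {p} (Or a b) \<longleftrightarrow> sat {p} a \<or> sat {p} b" for p
  proof
    assume "sat {p} (Or a b)"
    then obtain T1 T2 where u: "{p} = T1 \<union> T2" and s1: "sat T1 a" and s2: "sat T2 b" by auto
    have "p \<in> T1 \<or> p \<in> T2" using u by blast
    then show "sat {p} a \<or> sat {p} b" using Or.IH(1)[of T1] Or.IH(2)[of T2] s1 s2 by blast
  next
    assume "sat {p} a \<or> sat {p} b"
    then show "sat {p} (Or a b)"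
    proof
      assume "sat {p} a" then show ?thesis using eb by (simp only: sat.simps) (rule exI[of _ "{p}"], rule exI[of _ "{}"], simp)
    next
      assume "sat {p} b" then show ?thesis using ea by (simp only: sat.simps) (rule exI[of _ "{}"], rule exI[of _ "{p}"], simp)
    qed
  qed
  show ?case
  proof
    assume "sat T (Or a b)"
    then obtain T1 T2 where u: "T = T1 \<union> T2" and s1: "sat T1 a" and s2: "sat T2 b" by auto
    have "\<forall>p\<in>T1. sat {p} a" using Or.IH(1)[of T1] s1 by blast
    moreover have "\<forall>p\<in>T2. sat {p} b" using Or.IH(2)[of T2] s2 by blast
    ultimately show "\<forall>p\<in>T. sat {p} (Or a b)" using u single by blast
  next
    assume H: "\<forall>p\<in>T. sat {p} (Or a b)"
    have "T = {p\<in>T. sat {p} a} \<union> {p\<in>T. sat {p} b}" using H single by blast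
    moreover have "sat {p\<in>T. sat {p} a} a" using Or.IH(1)[of "{p\<in>T. sat {p} a}"] by blast
    moreover have "sat {p\<in>T. sat {p} b} b" using Or.IH(2)[of "{p\<in>T. sat {p} b}"] by blast
    ultimately show "sat T (Or a b)" by (simp only: sat.simps) blast
  qed
next
  case (Cf Xs \<phi>)
  have "team_do {p} Xs = {(case p of (s, F) \<Rightarrow> (asg_do F Xs s, sys_do F Xs))}" for p
    by (simp add: team_do_def)
  moreover have "team_do T Xs = (\<lambda>(s, F). (asg_do F Xs s, sys_do F Xs)) ` T"
    by (simp add: team_do_def)
  ultimately show ?case using Cf.IH[of "team_do T Xs"] Cf.IH[of "team_do {p} Xs" for p] by auto
qed

lemma sat_empty: "sat {} \<phi>"
  using sat_flat[of "{}" \<phi>] by simp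

lemma sat_Or1: "sat {p} (Or a b) \<longleftrightarrow> sat {p} a \<or> sat {p} b"
proof
  assume "sat {p} (Or a b)"
  then obtain T1 T2 where u: "{p} = T1 \<union> T2" and s1: "sat T1 a" and s2: "sat T2 b" by auto
  have "p \<in> T1 \<or> p \<in> T2" using u by blast
  then show "sat {p} a \<or> sat {p} b" using sat_flat[of T1 a] sat_flat[of T2 b] s1 s2 by blast
next
  assume "sat {p} a \<or> sat {p} b"
  then show "sat {p} (Or a b)"
  proof
    assume "sat {p} a" then show ?thesis using sat_empty[of b] by (simp only: sat.simps) (rule exI[of _ "{p}"], rule exI[of _ "{}"], simp)
  next
    assume "sat {p} b" then show ?thesis using sat_empty[of a] by (simp only: sat.simps) (rule exI[of _ "{}"], rule exI[of _ "{p}"], simp)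
  qed
qed

lemma sat_Bot1: "\<not> sat {p} (Bot Dom Ran)"
  by (simp add: Bot_def Let_def team_minus_def)

lemma sat_Top: "sat T (Top Dom Ran)"
  by (simp add: Top_def sat_Bot1)

lemma sat_BigOr1: "sat {p} (BigOr Dom Ran l) \<longleftrightarrow> (\<exists>a\<in>set l. sat {p} a)"
  by (induction Dom Ran l rule: BigOr.induct) (simp_all add: sat_Bot1 sat_Or1 del: sat.simps(4))

lemma sat_BigAnd: "sat T (BigAnd Dom Ran l) \<longleftrightarrow> (\<forall>a\<in>set l. sat T a)"
  by (induction Dom Ran l rule: BigAnd.induct) (auto simp: sat_Top)

lemma sat_Eq1: "sat {(s, G)} (Eq V c) \<longleftrightarrow> s V = c"
  by (simp add: team_minus_def)

lemma sat_Cf1: "sat {(s, G)} (Cf Xs (Eq V c)) \<longleftrightarrow> (\<not> consistent Xs \<or> asg_do G Xs s V = c)"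
  by (simp add: team_do_def team_minus_def)


lemma Fn_dep:
  assumes "is_sys Dom Ran G" "\<forall>X\<in>PA G V. f X = g X"
  shows "Fn G V f = Fn G V g"
proof (cases "V \<in> En G")
  case True
  then have "\<forall>p. Fn G V p = (if (\<forall>W\<in>PA G V. p W \<in> Ran W)
                          then Fn G V (restrict p (PA G V)) else undefined)"
    using assms(1) unfolding is_sys_def by blast
  moreover have "restrict f (PA G V) = restrict g (PA G V)" using assms(2) by auto
  moreover have "(\<forall>W\<in>PA G V. f W \<in> Ran W) = (\<forall>W\<in>PA G V. g W \<in> Ran W)" using assms(2) by auto
  ultimately show ?thesis by metis
next
  case False
  then show ?thesis using assms(1) unfolding is_sys_def by auto
qed

lemma PA_sub: "is_sys Dom Ran G \<Longrightarrow> PA G V \<subseteq> Dom - {V}"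
  unfolding is_sys_def by (cases "V \<in> En G") auto

lemma En_sub: "is_sys Dom Ran G \<Longrightarrow> En G \<subseteq> Dom"
  unfolding is_sys_def by auto

lemma Fn_notEn: "is_sys Dom Ran G \<Longrightarrow> V \<notin> En G \<Longrightarrow> Fn G V = (\<lambda>_. undefined) \<and> PA G V = {}"
  unfolding is_sys_def by auto

lemma Fn_ran:
  assumes "is_sys Dom Ran G" "V \<in> En G" "\<forall>X\<in>PA G V. f X \<in> Ran X"
  shows "Fn G V f \<in> Ran V"
proof -
  have "Fn G V f = Fn G V (restrict f (PA G V))"
    using Fn_dep[OF assms(1)] by auto
  moreover have "restrict f (PA G V) \<in> PiE (PA G V) Ran" using assms(3) by auto
  ultimately show ?thesis using assms(1,2) unfolding is_sys_def by metis
qed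

lemma ext2:
  assumes sig: "signature Dom Ran" and "A \<union> C \<subseteq> B" "B \<subseteq> Dom"
    and "p \<in> PiE A Ran" "q \<in> PiE C Ran" "\<forall>X\<in>A \<inter> C. p X = q X"
  shows "\<exists>r\<in>PiE B Ran. (\<forall>X\<in>A. r X = p X) \<and> (\<forall>X\<in>C. r X = q X)"
proof -
  define r where "r = (\<lambda>X. if X \<in> A then p X else if X \<in> C then q X
     else if X \<in> B then (SOME x. x \<in> Ran X) else undefined)"
  have ne: "\<forall>X\<in>Dom. Ran X \<noteq> {}" using sig unfolding signature_def by auto
  have "r X \<in> Ran X" if "X \<in> B" for X
  proof -
    have "Ran X \<noteq> {}" using ne that assms(3) by auto
    then have "(SOME x. x \<in> Ran X) \<in> Ran X" by (simp add: some_in_eq)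
    then show ?thesis unfolding r_def using assms(4,5) that by (auto simp: PiE_iff)
  qed
  moreover have "r \<in> extensional B" unfolding r_def extensional_def using assms(2) by auto
  ultimately have "r \<in> PiE B Ran" by (simp add: PiE_iff)
  moreover have "(\<forall>X\<in>A. r X = p X) \<and> (\<forall>X\<in>C. r X = q X)"
    unfolding r_def using assms by auto
  ultimately show ?thesis by blast
qed

lemma ext1:
  assumes sig: "signature Dom Ran" and "A \<subseteq> B" "B \<subseteq> Dom" "p \<in> PiE A Ran"
  shows "\<exists>r\<in>PiE B Ran. (\<forall>X\<in>A. r X = p X)"
  using ext2[OF sig, of A "{}" B p "\<lambda>_. undefined"] assms by auto

lemma asg_do_full:
  assumes sys: "is_sys Dom Ran G" and V: "V \<in> Dom" and iv: "ivars Xs = Dom - {V}"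
    and mo: "\<forall>X\<in>Dom-{V}. map_of Xs X = Some (a X)"
  shows "asg_do G Xs s V = (if V \<in> En G then Fn G V a else s V)"
proof -
  define s0 where "s0 = (\<lambda>X. if X \<in> Dom - {V} then a X else if X = V then
       (if V \<in> En G then Fn G V a else s V) else s X)"
  have En: "En G \<subseteq> Dom" using En_sub[OF sys] .
  have PA: "PA G V \<subseteq> Dom - {V}" using PA_sub[OF sys] .
  have agr: "\<forall>X\<in>PA G V. s' X = a X" if "\<forall>X\<in>Dom-{V}. s' X = a X" for s'
    using that PA by auto
  let ?P = "\<lambda>s'. \<forall>U. (U \<in> ivars Xs \<longrightarrow> s' U = the (map_of Xs U)) \<and>
          (U \<notin> ivars Xs \<and> U \<notin> En G \<longrightarrow> s' U = s U) \<and>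
          (U \<notin> ivars Xs \<and> U \<in> En G \<longrightarrow> s' U = Fn G U s')"
  have "?P s0"
  proof (intro allI conjI impI)
    fix U assume "U \<in> ivars Xs" then show "s0 U = the (map_of Xs U)"
      using iv mo unfolding s0_def by auto
  next
    fix U assume "U \<notin> ivars Xs \<and> U \<notin> En G" then show "s0 U = s U"
      using iv unfolding s0_def by auto
  next
    fix U assume U: "U \<notin> ivars Xs \<and> U \<in> En G"
    then have "U = V" using iv En by auto
    moreover have "Fn G V s0 = Fn G V a"
      using Fn_dep[OF sys] agr[of s0] unfolding s0_def by auto
    ultimately show "s0 U = Fn G U s0" using U unfolding s0_def by auto
  qed
  moreover have "s' = s0" if "?P s'" for s'
  proof
    fix U
    show "s' U = s0 U"
    proof (cases "U \<in> Dom - {V}")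
      case True then show ?thesis using that iv mo unfolding s0_def by auto
    next
      case False
      have a1: "\<forall>X\<in>Dom-{V}. s' X = a X" using that iv mo by auto
      show ?thesis
      proof (cases "U = V")
        case True
        have "Fn G V s' = Fn G V a" using Fn_dep[OF sys] agr[OF a1] by auto
        then show ?thesis using that True iv unfolding s0_def by auto
      next
        case False
        then show ?thesis using that iv En \<open>U \<notin> Dom - {V}\<close> unfolding s0_def by auto
      qed
    qed
  qed
  ultimately have "asg_do G Xs s = s0"
    unfolding asg_do_def by (rule the_equality)
  then show ?thesis unfolding s0_def using V by auto
qed


definition agr :: "'v set \<Rightarrow> ('v \<Rightarrow> 'a set) \<Rightarrow> 'v \<Rightarrow> ('v, 'a) sys \<Rightarrow> ('v, 'a) sys \<Rightarrow> bool" where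
  "agr Dom Ran V G F \<longleftrightarrow> (\<forall>r\<in>PiE (Dom - {V}) Ran. Fn G V r = Fn F V r)"

lemma fn_sim_iff:
  assumes sig: "signature Dom Ran" and G: "is_sys Dom Ran G" and F: "is_sys Dom Ran F"
    and V: "V \<in> Dom"
  shows "fn_sim Ran G F V \<longleftrightarrow> agr Dom Ran V G F"
proof
  assume H: "fn_sim Ran G F V"
  show "agr Dom Ran V G F" unfolding agr_def
  proof
    fix r assume r: "r \<in> PiE (Dom - {V}) Ran"
    have p: "restrict r (PA G V) \<in> PiE (PA G V) Ran" using r PA_sub[OF G] by auto
    have q: "restrict r (PA F V) \<in> PiE (PA F V) Ran" using r PA_sub[OF F] by auto
    have "Fn G V (restrict r (PA G V)) = Fn F V (restrict r (PA F V))"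
      using H p q unfolding fn_sim_def by auto
    moreover have "Fn G V r = Fn G V (restrict r (PA G V))" using Fn_dep[OF G] by auto
    moreover have "Fn F V r = Fn F V (restrict r (PA F V))" using Fn_dep[OF F] by auto
    ultimately show "Fn G V r = Fn F V r" by simp
  qed
next
  assume H: "agr Dom Ran V G F"
  show "fn_sim Ran G F V" unfolding fn_sim_def
  proof (intro ballI impI)
    fix p q assume p: "p \<in> PiE (PA G V) Ran" and q: "q \<in> PiE (PA F V) Ran"
      and pq: "\<forall>W\<in>PA G V \<inter> PA F V. p W = q W"
    obtain r where r: "r \<in> PiE (Dom - {V}) Ran" "\<forall>X\<in>PA G V. r X = p X" "\<forall>X\<in>PA F V. r X = q X"
      using ext2[OF sig, of "PA G V" "PA F V" "Dom - {V}" p q] PA_sub[OF G] PA_sub[OF F] p q pq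
      by auto
    have "Fn G V p = Fn G V r" using Fn_dep[OF G] r(2) by metis
    also have "\<dots> = Fn F V r" using H r(1) unfolding agr_def by auto
    also have "\<dots> = Fn F V q" using Fn_dep[OF F] r(3) by metis
    finally show "Fn G V p = Fn F V q" .
  qed
qed

lemma Cn_iff:
  assumes sig: "signature Dom Ran" and F: "is_sys Dom Ran F"
  shows "V \<in> Cn Ran F \<longleftrightarrow> V \<in> En F \<and> (\<exists>c. \<forall>r\<in>PiE (Dom - {V}) Ran. Fn F V r = c)"
proof
  assume "V \<in> Cn Ran F"
  then obtain c where c: "V \<in> En F" "\<forall>p\<in>PiE (PA F V) Ran. Fn F V p = c" unfolding Cn_def by auto
  have "\<forall>r\<in>PiE (Dom - {V}) Ran. Fn F V r = c"
  proof
    fix r assume r: "r \<in> PiE (Dom - {V}) Ran"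
    have p: "restrict r (PA F V) \<in> PiE (PA F V) Ran" using r PA_sub[OF F] by auto
    have "Fn F V r = Fn F V (restrict r (PA F V))" using Fn_dep[OF F] by auto
    then show "Fn F V r = c" using c p by auto
  qed
  then show "V \<in> En F \<and> (\<exists>c. \<forall>r\<in>PiE (Dom - {V}) Ran. Fn F V r = c)" using c by blast
next
  assume H: "V \<in> En F \<and> (\<exists>c. \<forall>r\<in>PiE (Dom - {V}) Ran. Fn F V r = c)"
  then obtain c where c: "\<forall>r\<in>PiE (Dom - {V}) Ran. Fn F V r = c" by blast
  have "\<forall>p\<in>PiE (PA F V) Ran. Fn F V p = c"
  proof
    fix p assume p: "p \<in> PiE (PA F V) Ran"
    obtain r where r: "r \<in> PiE (Dom - {V}) Ran" "\<forall>X\<in>PA F V. r X = p X"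
      using ext1[OF sig, of "PA F V" "Dom - {V}" p] PA_sub[OF F] p by auto
    have "Fn F V p = Fn F V r" using Fn_dep[OF F] r(2) by metis
    then show "Fn F V p = c" using c r(1) by auto
  qed
  then show "V \<in> Cn Ran F" using H unfolding Cn_def by auto
qed

lemma sys_sim_iff:
  assumes sig: "signature Dom Ran" and G: "is_sys Dom Ran G" and F: "is_sys Dom Ran F"
  shows "sys_sim Ran G F \<longleftrightarrow> (En G - Cn Ran G = En F - Cn Ran F \<and>
            (\<forall>V\<in>En G - Cn Ran G. agr Dom Ran V G F))"
  unfolding sys_sim_def using fn_sim_iff[OF sig G F] En_sub[OF G] by blast

lemma sim_refl: "signature Dom Ran \<Longrightarrow> is_sys Dom Ran F \<Longrightarrow> sys_sim Ran F F"
  using sys_sim_iff[of Dom Ran F F] unfolding agr_def by auto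

lemma sim_sym: "signature Dom Ran \<Longrightarrow> is_sys Dom Ran F \<Longrightarrow> is_sys Dom Ran G \<Longrightarrow>
   sys_sim Ran F G \<Longrightarrow> sys_sim Ran G F"
  using sys_sim_iff[of Dom Ran F G] sys_sim_iff[of Dom Ran G F] unfolding agr_def by auto

lemma sim_trans: "signature Dom Ran \<Longrightarrow> is_sys Dom Ran F \<Longrightarrow> is_sys Dom Ran G \<Longrightarrow> is_sys Dom Ran H \<Longrightarrow>
   sys_sim Ran F G \<Longrightarrow> sys_sim Ran G H \<Longrightarrow> sys_sim Ran F H"
  using sys_sim_iff[of Dom Ran F G] sys_sim_iff[of Dom Ran G H] sys_sim_iff[of Dom Ran F H]
  unfolding agr_def by auto


lemma cons_map: "consistent (map (\<lambda>X. (X, f X)) l)"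
  unfolding consistent_def by auto

lemma ivars_map: "ivars (map (\<lambda>X. (X, f X)) l) = set l"
  unfolding ivars_def by (induction l) auto

lemma map_of_map: "X \<in> set l \<Longrightarrow> map_of (map (\<lambda>X. (X, f X)) l) X = Some (f X)"
  by (induction l) auto

lemma cf_val:
  assumes G: "is_sys Dom Ran G" and V: "V \<in> Dom" and l: "set l = Dom - {V}"
  shows "sat {(s, G)} (Cf (map (\<lambda>X. (X, f X)) l) (Eq V c)) \<longleftrightarrow>
         (if V \<in> En G then Fn G V f else s V) = c"
proof -
  have "asg_do G (map (\<lambda>X. (X, f X)) l) s V = (if V \<in> En G then Fn G V f else s V)"
    by (rule asg_do_full[OF G V]) (auto simp: ivars_map l map_of_map)
  then show ?thesis unfolding sat_Cf1 by (simp add: cons_map)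
qed

lemma fin_Dom: "signature Dom Ran \<Longrightarrow> finite Dom"
  unfolding signature_def by auto

lemma fin_PiE: "signature Dom Ran \<Longrightarrow> A \<subseteq> Dom \<Longrightarrow> finite (PiE A Ran)"
  unfolding signature_def by (intro finite_PiE) (auto intro: finite_subset)

lemma xi1:
  assumes sig: "signature Dom Ran" and G: "is_sys Dom Ran G" and V: "V \<in> Dom"
    and s: "s \<in> PiE Dom Ran" and comp: "compatible s G"
  shows "sat {(s, G)} (xi Dom Ran V) \<longleftrightarrow> V \<notin> En G - Cn Ran G"
proof -
  let ?val = "\<lambda>r. if V \<in> En G then Fn G V r else s V"
  have finD: "finite Dom" using fin_Dom[OF sig] .
  have fin: "finite (Ran V \<times> PiE (Dom - {V}) Ran)"
    using sig V fin_PiE[OF sig, of "Dom - {V}"] unfolding signature_def by auto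
  have lW: "set (list_of (Dom - {V})) = Dom - {V}" using finD by (simp add: list_of_set)
  have "sat {(s, G)} (xi Dom Ran V) \<longleftrightarrow>
        (\<forall>v\<in>Ran V. \<forall>w\<in>PiE (Dom - {V}) Ran. s V \<noteq> v \<or> ?val w = v)"
  proof -
    have el: "sat {(s, G)} (Or (Neg (Eq V v)) (Cf (ant (Dom - {V}) w) (Eq V v))) \<longleftrightarrow>
       s V \<noteq> v \<or> ?val w = v" for v w
      unfolding sat_Or1 ant_def cf_val[OF G V lW] by (simp add: team_minus_def)
    show ?thesis
      unfolding xi_def Let_def sat_BigAnd set_map list_of_set[OF fin]
      by (simp add: el del: sat.simps)
  qed
  also have "\<dots> \<longleftrightarrow> (\<forall>w\<in>PiE (Dom - {V}) Ran. ?val w = s V)"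
    using s V by (auto simp: PiE_iff)
  also have "\<dots> \<longleftrightarrow> V \<notin> En G - Cn Ran G"
  proof (cases "V \<in> En G")
    case True
    have "(\<forall>w\<in>PiE (Dom - {V}) Ran. Fn G V w = s V) \<longleftrightarrow> V \<in> Cn Ran G"
    proof
      assume "\<forall>w\<in>PiE (Dom - {V}) Ran. Fn G V w = s V"
      then show "V \<in> Cn Ran G" using Cn_iff[OF sig G] True by blast
    next
      assume "V \<in> Cn Ran G"
      then obtain c where c: "\<forall>r\<in>PiE (Dom - {V}) Ran. Fn G V r = c" using Cn_iff[OF sig G] by blast
      have "s V = Fn G V s" using comp True unfolding compatible_def by auto
      also have "\<dots> = Fn G V (restrict s (Dom - {V}))" 
        by (rule Fn_dep[OF G]) (use PA_sub[OF G, of V] in auto)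
      also have "\<dots> = c" using c s by (auto simp: PiE_iff)
      finally have "s V = c" .
      then show "\<forall>w\<in>PiE (Dom - {V}) Ran. Fn G V w = s V" using c by auto
    qed
    then show ?thesis using True by auto
  next
    case False then show ?thesis by auto
  qed
  finally show ?thesis .
qed


lemma eta1:
  fixes Dom :: "'v set" and Ran :: "'v \<Rightarrow> 'a set" and s :: "'v \<Rightarrow> 'a"
  assumes sig: "signature Dom Ran" and G: "is_sys Dom Ran G" and F: "is_sys Dom Ran F"
    and V: "V \<in> En F - Cn Ran F"
  shows "sat {(s, G)} (eta Dom Ran F V) \<longleftrightarrow> V \<in> En G \<and> agr Dom Ran V G F"
proof -
  let ?val = "\<lambda>r. if V \<in> En G then Fn G V r else s V"
  define W where "W = Dom - (PA F V \<union> {V})"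
  define m where "m = (\<lambda>(w::'v \<Rightarrow> 'a) (p::'v \<Rightarrow> 'a) X. if X \<in> PA F V then p X else w X)"
  have finD: "finite Dom" using fin_Dom[OF sig] .
  have VD: "V \<in> Dom" using V En_sub[OF F] by auto
  have PAF: "PA F V \<subseteq> Dom - {V}" using PA_sub[OF F] .
  have PAG: "PA G V \<subseteq> Dom - {V}" using PA_sub[OF G] .
  have lW: "set (list_of W) = W" using finD unfolding W_def by (simp add: list_of_set)
  have lP: "set (list_of (PA F V)) = PA F V" using finD PAF by (simp add: list_of_set finite_subset)
  have WP: "W \<union> PA F V = Dom - {V}" "W \<inter> PA F V = {}" using PAF unfolding W_def by auto
  have fin: "finite (PiE W Ran \<times> PiE (PA F V) Ran)"
    using fin_PiE[OF sig, of W] fin_PiE[OF sig, of "PA F V"] PAF unfolding W_def by auto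
  have antm: "ant W w @ ant (PA F V) p = map (\<lambda>X. (X, m w p X)) (list_of W @ list_of (PA F V))" for w p
    unfolding ant_def m_def using lW lP WP by auto
  have lset: "set (list_of W @ list_of (PA F V)) = Dom - {V}" using lW lP WP by auto
  have val_dep: "?val r = ?val r'" if "\<forall>X\<in>Dom-{V}. r X = r' X" for r r'
    using Fn_dep[OF G, of V r r'] that PAG by auto
  have el: "sat {(s, G)} (Cf (ant W w @ ant (PA F V) p) (Eq V (Fn F V p))) \<longleftrightarrow>
       ?val (m w p) = Fn F V p" for w p
    unfolding antm cf_val[OF G VD lset] by simp
  have "sat {(s, G)} (eta Dom Ran F V) \<longleftrightarrow>
     (\<forall>w\<in>PiE W Ran. \<forall>p\<in>PiE (PA F V) Ran. ?val (m w p) = Fn F V p)"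
    unfolding eta_def Let_def W_def[symmetric] sat_BigAnd set_map list_of_set[OF fin]
    by (simp add: el del: sat.simps)
  also have "\<dots> \<longleftrightarrow> (\<forall>r\<in>PiE (Dom - {V}) Ran. ?val r = Fn F V r)"
  proof
    assume H: "\<forall>w\<in>PiE W Ran. \<forall>p\<in>PiE (PA F V) Ran. ?val (m w p) = Fn F V p"
    show "\<forall>r\<in>PiE (Dom - {V}) Ran. ?val r = Fn F V r"
    proof
      fix r assume r: "r \<in> PiE (Dom - {V}) Ran"
      have w: "restrict r W \<in> PiE W Ran" using r WP by auto
      have p: "restrict r (PA F V) \<in> PiE (PA F V) Ran" using r PAF by auto
      have ag: "\<forall>X\<in>Dom-{V}. m (restrict r W) (restrict r (PA F V)) X = r X"
        unfolding m_def using WP by auto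
      have "?val r = ?val (m (restrict r W) (restrict r (PA F V)))"
        using val_dep ag by metis
      also have "\<dots> = Fn F V (restrict r (PA F V))" using H w p by blast
      also have "\<dots> = Fn F V r" by (rule Fn_dep[OF F]) auto
      finally show "?val r = Fn F V r" .
    qed
  next
    assume H: "\<forall>r\<in>PiE (Dom - {V}) Ran. ?val r = Fn F V r"
    show "\<forall>w\<in>PiE W Ran. \<forall>p\<in>PiE (PA F V) Ran. ?val (m w p) = Fn F V p"
    proof (intro ballI)
      fix w p assume w: "w \<in> PiE W Ran" and p: "p \<in> PiE (PA F V) Ran"
      define r where "r = restrict (m w p) (Dom - {V})"
      have r: "r \<in> PiE (Dom - {V}) Ran"
        unfolding r_def m_def using w p WP by (auto simp: PiE_iff)
      have "?val (m w p) = ?val r" using val_dep unfolding r_def by auto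
      also have "\<dots> = Fn F V r" using H r by blast
      also have "\<dots> = Fn F V p" by (rule Fn_dep[OF F]) (use PAF in \<open>auto simp: r_def m_def\<close>)
      finally show "?val (m w p) = Fn F V p" .
    qed
  qed
  also have "\<dots> \<longleftrightarrow> V \<in> En G \<and> agr Dom Ran V G F"
  proof (cases "V \<in> En G")
    case True then show ?thesis unfolding agr_def by auto
  next
    case False
    have "\<not> (\<forall>r\<in>PiE (Dom - {V}) Ran. s V = Fn F V r)"
      using V Cn_iff[OF sig F, of V] by (metis (no_types, lifting) DiffE)
    then show ?thesis using False by auto
  qed
  finally show ?thesis .
qed


lemma Phi1:
  assumes sig: "signature Dom Ran" and G: "is_sys Dom Ran G" and F: "is_sys Dom Ran F"
    and s: "s \<in> PiE Dom Ran" and comp: "compatible s G"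
  shows "sat {(s, G)} (Phi Dom Ran F) \<longleftrightarrow> sys_sim Ran G F"
proof -
  have finD: "finite Dom" using fin_Dom[OF sig] .
  have EF: "En F \<subseteq> Dom" "En G \<subseteq> Dom" using En_sub[OF F] En_sub[OF G] by auto
  have f1: "finite (En F - Cn Ran F)" using finD EF finite_subset by blast
  have f2: "finite (Dom - (En F - Cn Ran F))" using finD by auto
  have "sat {(s, G)} (Phi Dom Ran F) \<longleftrightarrow>
     (\<forall>V\<in>En F - Cn Ran F. V \<in> En G \<and> agr Dom Ran V G F) \<and>
     (\<forall>V\<in>Dom - (En F - Cn Ran F). V \<notin> En G - Cn Ran G)"
    unfolding Phi_def sat.simps(3) sat_BigAnd set_map list_of_set[OF f1] list_of_set[OF f2]
    using eta1[OF sig G F] xi1[OF sig G _ s comp] by auto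
  also have "\<dots> \<longleftrightarrow> sys_sim Ran G F"
  proof
    assume H: "(\<forall>V\<in>En F - Cn Ran F. V \<in> En G \<and> agr Dom Ran V G F) \<and>
     (\<forall>V\<in>Dom - (En F - Cn Ran F). V \<notin> En G - Cn Ran G)"
    have "V \<notin> Cn Ran G" if V: "V \<in> En F - Cn Ran F" for V
    proof
      assume "V \<in> Cn Ran G"
      then obtain c where c: "\<forall>r\<in>PiE (Dom - {V}) Ran. Fn G V r = c" using Cn_iff[OF sig G] by blast
      have "\<forall>r\<in>PiE (Dom - {V}) Ran. Fn F V r = c" using c H V unfolding agr_def by auto
      then have "V \<in> Cn Ran F" using Cn_iff[OF sig F] V by blast
      then show False using V by auto
    qed
    then have "En G - Cn Ran G = En F - Cn Ran F" using H EF by blast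
    then show "sys_sim Ran G F" using sys_sim_iff[OF sig G F] H by auto
  next
    assume "sys_sim Ran G F"
    then show "(\<forall>V\<in>En F - Cn Ran F. V \<in> En G \<and> agr Dom Ran V G F) \<and>
     (\<forall>V\<in>Dom - (En F - Cn Ran F). V \<notin> En G - Cn Ran G)"
      using sys_sim_iff[OF sig G F] by auto
  qed
  finally show ?thesis .
qed

lemma Fn_val:
  assumes G: "is_sys Dom Ran G"
  shows "Fn G V p \<in> Ran V \<union> {undefined}"
proof (cases "V \<in> En G")
  case True
  then have e: "Fn G V p = (if (\<forall>W\<in>PA G V. p W \<in> Ran W)
                          then Fn G V (restrict p (PA G V)) else undefined)"
    using G unfolding is_sys_def by blast
  show ?thesis
  proof (cases "\<forall>W\<in>PA G V. p W \<in> Ran W")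
    case True
    then show ?thesis using Fn_ran[OF G \<open>V \<in> En G\<close>] by auto
  next
    case False then show ?thesis using e by auto
  qed
next
  case False then show ?thesis using Fn_notEn[OF G] by auto
qed

lemma fin_Fsig:
  assumes sig: "signature Dom Ran"
  shows "finite (Fsig Dom Ran)"
proof -
  define U where "U = (\<Union>B\<in>Pow Dom. PiE B Ran)"
  define C where "C = (\<Union>X\<in>Dom. Ran X) \<union> {undefined}"
  define \<phi> where "\<phi> = (\<lambda>F. (En F, restrict (PA F) Dom, restrict (\<lambda>V. restrict (Fn F V) U) Dom))"
  have finD: "finite Dom" using fin_Dom[OF sig] .
  have finU: "finite U" unfolding U_def using fin_PiE[OF sig] finD by auto
  have finC: "finite C" unfolding C_def using sig unfolding signature_def by auto
  have "\<phi> ` Fsig Dom Ran \<subseteq> Pow Dom \<times> PiE Dom (\<lambda>_. Pow Dom) \<times> PiE Dom (\<lambda>_. PiE U (\<lambda>_. C))"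
  proof
    fix x assume "x \<in> \<phi> ` Fsig Dom Ran"
    then obtain F where F: "is_sys Dom Ran F" and x: "x = \<phi> F" unfolding Fsig_def by auto
    have "Fn F V p \<in> C" if "V \<in> Dom" for V p using Fn_val[OF F, of V p] that unfolding C_def by auto
    then have a3: "(\<lambda>V\<in>Dom. restrict (Fn F V) U) \<in> PiE Dom (\<lambda>_. PiE U (\<lambda>_. C))"
      by simp
    have "PA F V \<in> Pow Dom" for V using PA_sub[OF F, of V] by auto
    then have a2: "restrict (PA F) Dom \<in> PiE Dom (\<lambda>_. Pow Dom)" by simp
    have a1: "En F \<in> Pow Dom" using En_sub[OF F] by simp
    show "x \<in> Pow Dom \<times> PiE Dom (\<lambda>_. Pow Dom) \<times> PiE Dom (\<lambda>_. PiE U (\<lambda>_. C))"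
      unfolding x \<phi>_def using a1 a2 a3 by (simp only: mem_Times_iff fst_conv snd_conv)
  qed
  moreover have "finite (Pow Dom \<times> PiE Dom (\<lambda>_. Pow Dom) \<times> PiE Dom (\<lambda>_. PiE U (\<lambda>_. C)))"
    using finD finU finC by (intro finite_cartesian_product finite_PiE) auto
  ultimately have fi: "finite (\<phi> ` Fsig Dom Ran)" by (rule finite_subset)
  have "inj_on \<phi> (Fsig Dom Ran)"
  proof
    fix F G assume "F \<in> Fsig Dom Ran" "G \<in> Fsig Dom Ran" and eq: "\<phi> F = \<phi> G"
    then have F: "is_sys Dom Ran F" and G: "is_sys Dom Ran G" unfolding Fsig_def by auto
    have eq': "En F = En G \<and> restrict (PA F) Dom = restrict (PA G) Dom \<and>
       restrict (\<lambda>V. restrict (Fn F V) U) Dom = restrict (\<lambda>V. restrict (Fn G V) U) Dom"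
      using eq unfolding \<phi>_def prod.inject .
    have En: "En F = En G" using eq' by blast
    have PA: "PA F = PA G"
    proof
      fix V show "PA F V = PA G V"
      proof (cases "V \<in> Dom")
        case True
        then show ?thesis using eq' by (metis restrict_apply')
      next
        case False
        then have "V \<notin> En F" "V \<notin> En G" using En_sub[OF F] En_sub[OF G] by auto
        then show ?thesis using Fn_notEn[OF F, of V] Fn_notEn[OF G, of V] by simp
      qed
    qed
    have Fn: "Fn F = Fn G"
    proof
      fix V show "Fn F V = Fn G V"
      proof (cases "V \<in> En F")
        case False
        then show ?thesis using Fn_notEn[OF F] Fn_notEn[OF G] En by auto
      next
        case True
        have VD: "V \<in> Dom" using True En_sub[OF F] by auto
        have U: "Fn F V q = Fn G V q" if "q \<in> U" for q
        proof -
          have "restrict (\<lambda>V. restrict (Fn F V) U) Dom V q = restrict (\<lambda>V. restrict (Fn G V) U) Dom V q"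
            using eq' by simp
          then show ?thesis using VD that by auto
        qed
        have eF: "\<forall>p. Fn F V p = (if (\<forall>W\<in>PA F V. p W \<in> Ran W)
                          then Fn F V (restrict p (PA F V)) else undefined)"
          using F True unfolding is_sys_def by blast
        have eG: "\<forall>p. Fn G V p = (if (\<forall>W\<in>PA G V. p W \<in> Ran W)
                          then Fn G V (restrict p (PA G V)) else undefined)"
          using G True En unfolding is_sys_def by blast
        show ?thesis
        proof
          fix p
          show "Fn F V p = Fn G V p"
          proof (cases "\<forall>W\<in>PA F V. p W \<in> Ran W")
            case True
            have "restrict p (PA F V) \<in> U" unfolding U_def using True PA_sub[OF F, of V] by auto
            then show ?thesis using eF eG PA U True by metis
          next
            case False
            then show ?thesis using eF eG PA by metis
          qed
        qed
      qed
    qed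
    show "F = G" using En PA Fn unfolding En_def PA_def Fn_def by (simp add: prod_eq_iff)
  qed
  then show ?thesis using fi finite_imageD by blast
qed

lemma Theta1:
  assumes sig: "signature Dom Ran" and A: "finite A" "A \<subseteq> PiE Dom Ran" and s: "s \<in> PiE Dom Ran"
  shows "sat {(s, G)} (Theta Dom Ran A) \<longleftrightarrow> s \<in> A"
proof -
  have finD: "finite Dom" using fin_Dom[OF sig] .
  have "sat {(s, G)} (Theta Dom Ran A) \<longleftrightarrow> (\<exists>t\<in>A. \<forall>V\<in>Dom. s V = t V)"
    unfolding Theta_def sat_BigOr1 set_map list_of_set[OF A(1)]
    by (simp add: sat_BigAnd list_of_set[OF finD] sat_Eq1 del: sat.simps)
  also have "\<dots> \<longleftrightarrow> s \<in> A"
  proof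
    assume "\<exists>t\<in>A. \<forall>V\<in>Dom. s V = t V"
    then obtain t where "t \<in> A" "\<forall>V\<in>Dom. s V = t V" by blast
    moreover then have "s = t" using PiE_ext[OF s, of t] A(2) by auto
    ultimately show "s \<in> A" by simp
  qed auto
  finally show ?thesis .
qed


theorem corollary4p9:
  fixes Dom :: "'v set" and Ran :: "'v \<Rightarrow> 'a set" and S T :: "('v, 'a) team"
  assumes "signature Dom Ran"
    and "gcteam Dom Ran S" and "gcteam Dom Ran T"
  shows "sat S (BigOr Dom Ran
           (map (\<lambda>F. And (Theta Dom Ran (team_minus (team_F Ran T F))) (Phi Dom Ran F))
                (list_of (Fsig Dom Ran))))
         \<longleftrightarrow> team_preceq Dom Ran S T"
proof -
  note sig = assms(1)
  let ?TM = "\<lambda>F. team_minus (team_F Ran T F)"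
  have finF: "finite (Fsig Dom Ran)" using fin_Fsig[OF sig] .
  have finP: "finite (PiE Dom Ran)" using fin_PiE[OF sig] by auto
  have Sx: "s \<in> PiE Dom Ran \<and> is_sys Dom Ran G \<and> compatible s G" if "(s, G) \<in> S" for s G
    using assms(2) that unfolding gcteam_def Fsig_def by auto
  have Tx: "s \<in> PiE Dom Ran \<and> is_sys Dom Ran G \<and> compatible s G" if "(s, G) \<in> T" for s G
    using assms(3) that unfolding gcteam_def Fsig_def by auto
  have TMsub: "?TM F \<subseteq> PiE Dom Ran" for F
  proof
    fix s assume "s \<in> ?TM F"
    then obtain G where "(s, G) \<in> T" unfolding team_minus_def team_F_def by auto
    then show "s \<in> PiE Dom Ran" using Tx by blast
  qed
  have TMfin: "finite (?TM F)" for F using TMsub finP finite_subset by blast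
  have el: "sat {(s, G)} (And (Theta Dom Ran (?TM F)) (Phi Dom Ran F)) \<longleftrightarrow>
      s \<in> ?TM F \<and> sys_sim Ran G F" if "(s, G) \<in> S" "F \<in> Fsig Dom Ran" for s G F
  proof -
    have a: "s \<in> PiE Dom Ran" "is_sys Dom Ran G" "compatible s G" using Sx[OF that(1)] by auto
    have b: "is_sys Dom Ran F" using that(2) unfolding Fsig_def by auto
    show ?thesis
      using Theta1[OF sig TMfin[of F] TMsub[of F] a(1), where G=G] Phi1[OF sig a(2) b a(1) a(3)]
      by simp
  qed
  have "sat S (BigOr Dom Ran
           (map (\<lambda>F. And (Theta Dom Ran (?TM F)) (Phi Dom Ran F)) (list_of (Fsig Dom Ran))))
     \<longleftrightarrow> (\<forall>(s, G)\<in>S. \<exists>F\<in>Fsig Dom Ran. s \<in> ?TM F \<and> sys_sim Ran G F)"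
    apply (subst sat_flat)
    apply (simp only: sat_BigOr1 set_map list_of_set[OF finF])
    using el by fastforce
  also have "\<dots> \<longleftrightarrow> team_preceq Dom Ran S T"
  proof
    assume H: "\<forall>(s, G)\<in>S. \<exists>F\<in>Fsig Dom Ran. s \<in> ?TM F \<and> sys_sim Ran G F"
    define R where "R = {(s, H). (s, H) \<in> T \<and> (\<exists>G. (s, G) \<in> S \<and> sys_sim Ran H G)}"
    have "R \<subseteq> T" unfolding R_def by auto
    moreover have "team_approx Dom Ran S R"
      unfolding team_approx_def
    proof
      fix F assume F: "F \<in> Fsig Dom Ran"
      then have Fs: "is_sys Dom Ran F" unfolding Fsig_def by auto
      show "team_minus (team_F Ran S F) = team_minus (team_F Ran R F)"
      proof
        show "team_minus (team_F Ran S F) \<subseteq> team_minus (team_F Ran R F)"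
        proof
          fix s assume "s \<in> team_minus (team_F Ran S F)"
          then obtain G where sG: "(s, G) \<in> S" "sys_sim Ran G F"
            unfolding team_minus_def team_F_def by auto
          obtain F' where F': "F' \<in> Fsig Dom Ran" "s \<in> ?TM F'" "sys_sim Ran G F'"
            using H sG(1) by blast
          obtain H' where H': "(s, H') \<in> T" "sys_sim Ran H' F'"
            using F'(2) unfolding team_minus_def team_F_def by auto
          have G: "is_sys Dom Ran G" using Sx[OF sG(1)] by auto
          have HH: "is_sys Dom Ran H'" using Tx[OF H'(1)] by auto
          have F's: "is_sys Dom Ran F'" using F'(1) unfolding Fsig_def by auto
          have h1: "sys_sim Ran H' G"
            using sim_trans[OF sig HH F's G H'(2) sim_sym[OF sig G F's F'(3)]] .
          moreover have "sys_sim Ran H' F" using sim_trans[OF sig HH G Fs h1 sG(2)] .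
          ultimately have "(s, H') \<in> team_F Ran R F"
            unfolding team_F_def R_def using H'(1) sG(1) by blast
          then show "s \<in> team_minus (team_F Ran R F)" unfolding team_minus_def by force
        qed
      next
        show "team_minus (team_F Ran R F) \<subseteq> team_minus (team_F Ran S F)"
        proof
          fix s assume "s \<in> team_minus (team_F Ran R F)"
          then obtain H' G where a: "(s, H') \<in> T" "(s, G) \<in> S" "sys_sim Ran H' G" "sys_sim Ran H' F"
            unfolding team_minus_def team_F_def R_def by auto
          have G: "is_sys Dom Ran G" using Sx[OF a(2)] by auto
          have HH: "is_sys Dom Ran H'" using Tx[OF a(1)] by auto
          have "sys_sim Ran G F" using sim_trans[OF sig G HH Fs sim_sym[OF sig HH G a(3)] a(4)] .
          then have "(s, G) \<in> team_F Ran S F" unfolding team_F_def using a(2) by auto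
          then show "s \<in> team_minus (team_F Ran S F)" unfolding team_minus_def by force
        qed
      qed
    qed
    ultimately show "team_preceq Dom Ran S T" unfolding team_preceq_def by blast
  next
    assume P: "team_preceq Dom Ran S T"
    show "\<forall>(s, G)\<in>S. \<exists>F\<in>Fsig Dom Ran. s \<in> ?TM F \<and> sys_sim Ran G F"
    proof (cases "S = {}")
      case True then show ?thesis by auto
    next
      case False
      then obtain R where R: "R \<subseteq> T" "team_approx Dom Ran S R" using P unfolding team_preceq_def by auto
      show ?thesis
      proof (intro ballI, clarify)
        fix s G assume sG: "(s, G) \<in> S"
        have G: "is_sys Dom Ran G" using Sx[OF sG] by auto
        then have GF: "G \<in> Fsig Dom Ran" unfolding Fsig_def by auto
        have rr: "sys_sim Ran G G" using sim_refl[OF sig G] .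
        have "(s, G) \<in> team_F Ran S G" using sG rr unfolding team_F_def by blast
        then have "s \<in> team_minus (team_F Ran S G)" unfolding team_minus_def by (metis fst_conv image_eqI)
        also have "\<dots> = team_minus (team_F Ran R G)" using R(2) GF unfolding team_approx_def by auto
        also have "\<dots> \<subseteq> ?TM G" using R(1) unfolding team_minus_def team_F_def by auto
        finally show "\<exists>F\<in>Fsig Dom Ran. s \<in> ?TM F \<and> sys_sim Ran G F" using GF rr by blast
      qed
    qed
  qed
  finally show ?thesis .
qed

end
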